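(* Let $q$ be a prime power and let $n,k,r,x$ be integers with $0\le x\le r\le \min(n,k)$. Let $\mathbf{M}$ be a random $n\times k$ matrix over $\mathbb{F}_q$ whose entries are independent and uniformly distributed on $\mathbb{F}_q$, conditioned on the event $\mathrm{rank}(\mathbf{M})=r$. Let $X=\{i\in\{1,\dots,k\}:\mathbf{e}_i\in\mathrm{Row}(\mathbf{M})\}$. Then $$P(|X|=x \mid R=r,\,N=n)=\frac{\binom{k}{x}}{\binom{k}{r}_q}\sum_{j=0}^{k-x}(-1)^j\binom{k-x}{j}\binom{k-x-j}{r-x-j}_q .$$
   Context: $\mathbf{e}_i$ denotes the $i$-th standard unit vector of $\mathbb{F}_q^k$, and $\mathrm{Row}(\mathbf{M})$ is the row space of $\mathbf{M}$. $R$ denotes the rank of $\mathbf{M}$ and $N$ its number of rows. $\binom{m}{d}$ is the ordinary binomial coefficient. $\binom{m}{d}_q$ is the Gaussian binomial coefficient, i.e. the number of $d$-dimensional subspaces of an $m$-dimensional vector space over $\mathbb{F}_q$, $\binom{m}{d}_q=\prod_{i=0}^{d-1}\frac{q^{m}-q^{i}}{q^{d}-q^{i}}$ for $0\le d\le m$. By convention $\binom{m}{d}_q=0$ if $d<0$ or $d>m$. *)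

theory Defs
  imports "HOL-Analysis.Analysis" "HOL-Probability.Probability"
begin

definition gauss_binom :: "nat \<Rightarrow> int \<Rightarrow> int \<Rightarrow> real" where
  "gauss_binom q m d =
     (if 0 \<le> d \<and> d \<le> m
      then (\<Prod>i<nat d. (real q ^ nat m - real q ^ i) / (real q ^ nat d - real q ^ i))
      else 0)"

end

theory Submission
  imports Defs
begin


lemma card_span_indep:
  fixes B :: "('a::{finite,field}^'k) set"
  assumes "vec.independent B"
  shows "card (vec.span B) = CARD('a) ^ card B"
proof -
  have fB: "finite B" using assms vec.independent_explicit by blast
  define \<phi> where "\<phi> = (\<lambda>u::('a^'k) \<Rightarrow> 'a. \<Sum>v\<in>B. u v *s v)"
  have "bij_betw \<phi> (B \<rightarrow>\<^sub>E UNIV) (vec.span B)"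
  proof (rule bij_betwI')
    fix u w :: "'a^'k \<Rightarrow> 'a" assume u: "u \<in> B \<rightarrow>\<^sub>E UNIV" and w: "w \<in> B \<rightarrow>\<^sub>E UNIV"
    show "(\<phi> u = \<phi> w) = (u = w)"
    proof
      assume "\<phi> u = \<phi> w"
      then have eq: "(\<Sum>v\<in>B. (u v - w v) *s v) = 0"
        by (simp add: \<phi>_def scaleR_diff_left vector_sub_rdistrib sum_subtractf)
      have H: "\<forall>c. (\<Sum>v\<in>B. c v *s v) = 0 \<longrightarrow> (\<forall>v\<in>B. c v = 0)"
        using assms vec.independent_explicit by blast
      have "\<forall>v\<in>B. u v - w v = 0" using H[rule_format, OF eq] by blast
      then show "u = w" using u w by (auto simp: PiE_def extensional_def fun_eq_iff)
    qed simp
  next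
    fix u :: "'a^'k \<Rightarrow> 'a" assume "u \<in> B \<rightarrow>\<^sub>E UNIV" then show "\<phi> u \<in> vec.span B"
      unfolding \<phi>_def by (simp add: vec.span_finite[OF fB])
  next
    fix y assume "y \<in> vec.span B"
    then obtain u where "y = (\<Sum>v\<in>B. u v *s v)" using vec.span_finite[OF fB] by auto
    then show "\<exists>x\<in>B \<rightarrow>\<^sub>E UNIV. y = \<phi> x"
      by (intro bexI[of _ "restrict u B"]) (auto simp: \<phi>_def intro!: sum.cong)
  qed
  then have "card (vec.span B) = card (B \<rightarrow>\<^sub>E (UNIV::'a set))" by (simp add: bij_betw_same_card)
  also have "\<dots> = CARD('a) ^ card B" using fB by (simp add: card_PiE prod_constant)
  finally show ?thesis .
qed

lemma card_subspace:
  fixes S :: "('a::{finite,field}^'k) set"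
  assumes "vec.subspace S"
  shows "card S = CARD('a) ^ vec.dim S"
proof -
  obtain B where B: "B \<subseteq> S" "vec.independent B" "S \<subseteq> vec.span B" "card B = vec.dim S"
    using vec.basis_exists by blast
  have "vec.span B = S" using B assms vec.span_minimal by blast
  then show ?thesis using card_span_indep[OF B(2)] B(4) by simp
qed

lemma dim_set_bound:
  fixes W :: "('a::field^'k) set"
  shows "vec.dim (W \<union> set xs) \<le> vec.dim W + length xs"
proof (induction xs)
  case Nil then show ?case by simp
next
  case (Cons a xs)
  have "W \<union> set (a # xs) = insert a (W \<union> set xs)" by auto
  then show ?case using Cons by (simp add: vec.dim_insert)
qed

definition ext_set :: "('a::field^'k) set \<Rightarrow> ('a^'k) set \<Rightarrow> nat \<Rightarrow> ('a^'k) list set" where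
  "ext_set W A s = {xs. length xs = s \<and> set xs \<subseteq> A \<and> vec.dim (W \<union> set xs) = vec.dim W + s}"

lemma ext_set_Suc:
  fixes W A :: "('a::field^'k) set"
  shows "ext_set W A (Suc s) = (\<lambda>(xs,v). v # xs) ` (SIGMA xs:ext_set W A s. A - vec.span (W \<union> set xs))"
proof (intro equalityI subsetI)
  fix L assume L: "L \<in> ext_set W A (Suc s)"
  then obtain v xs where Lv: "L = v # xs" and len: "length xs = s"
    by (cases L) (auto simp: ext_set_def)
  have eq: "W \<union> set L = insert v (W \<union> set xs)" using Lv by auto
  have b: "vec.dim (W \<union> set xs) \<le> vec.dim W + s" using dim_set_bound[of W xs] len by simp
  have d: "vec.dim (insert v (W \<union> set xs)) = vec.dim W + Suc s" using L eq by (simp add: ext_set_def)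
  have nv: "v \<notin> vec.span (W \<union> set xs)"
  proof
    assume "v \<in> vec.span (W \<union> set xs)"
    then have "vec.dim (insert v (W \<union> set xs)) = vec.dim (W \<union> set xs)" by (simp add: vec.dim_insert)
    then show False using d b by simp
  qed
  then have "vec.dim (W \<union> set xs) = vec.dim W + s" using d by (simp add: vec.dim_insert)
  then have "xs \<in> ext_set W A s" "v \<in> A" using L Lv len by (auto simp: ext_set_def)
  then show "L \<in> (\<lambda>(xs,v). v # xs) ` (SIGMA xs:ext_set W A s. A - vec.span (W \<union> set xs))"
    using nv Lv by force
next
  fix L assume "L \<in> (\<lambda>(xs,v). v # xs) ` (SIGMA xs:ext_set W A s. A - vec.span (W \<union> set xs))"
  then obtain v xs where Lv: "L = v # xs" and xs: "xs \<in> ext_set W A s" and v: "v \<in> A" "v \<notin> vec.span (W \<union> set xs)"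
    by auto
  have eq: "W \<union> set L = insert v (W \<union> set xs)" using Lv by auto
  show "L \<in> ext_set W A (Suc s)"
    using xs v eq Lv by (auto simp: ext_set_def vec.dim_insert)
qed

lemma card_ext_set:
  fixes W A :: "('a::{finite,field}^'k) set"
  assumes W: "vec.subspace W" and A: "vec.subspace A" and WA: "W \<subseteq> A"
    and le: "vec.dim W + s \<le> vec.dim A"
  shows "card (ext_set W A s) = (\<Prod>i<s. CARD('a)^vec.dim A - CARD('a)^(vec.dim W + i))"
  using le
proof (induction s)
  case 0
  have "ext_set W A 0 = {[]}" by (auto simp: ext_set_def)
  then show ?case by simp
next
  case (Suc s)
  let ?q = "CARD('a)"
  have IH: "card (ext_set W A s) = (\<Prod>i<s. ?q^vec.dim A - ?q^(vec.dim W + i))" using Suc by simp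
  have fl: "finite {xs::('a^'k) list. set xs \<subseteq> UNIV \<and> length xs = s}"
    by (rule finite_lists_length_eq) simp
  have fin: "finite (ext_set W A s)"
    by (rule finite_subset[OF _ fl]) (auto simp: ext_set_def)
  have inner: "card (A - vec.span (W \<union> set xs)) = ?q^vec.dim A - ?q^(vec.dim W + s)"
    if xs: "xs \<in> ext_set W A s" for xs
  proof -
    have sub: "vec.span (W \<union> set xs) \<subseteq> A"
    proof (rule vec.span_minimal[OF _ A])
      show "W \<union> set xs \<subseteq> A" using xs WA by (auto simp: ext_set_def)
    qed
    have "card (A - vec.span (W \<union> set xs)) = card A - card (vec.span (W \<union> set xs))"
      by (rule card_Diff_subset[OF _ sub]) simp
    also have "\<dots> = ?q^vec.dim A - ?q^(vec.dim W + s)"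
      using xs by (simp add: card_subspace[OF A] card_subspace[OF vec.subspace_span] ext_set_def)
    finally show ?thesis .
  qed
  have "card (ext_set W A (Suc s)) = card (SIGMA xs:ext_set W A s. A - vec.span (W \<union> set xs))"
    unfolding ext_set_Suc by (rule card_image) (auto simp: inj_on_def)
  also have "\<dots> = (\<Sum>xs\<in>ext_set W A s. card (A - vec.span (W \<union> set xs)))"
    by (rule card_SigmaI[OF fin]) simp
  also have "\<dots> = card (ext_set W A s) * (?q^vec.dim A - ?q^(vec.dim W + s))"
    using inner by simp
  finally show ?case using IH by (simp add: mult.commute)
qed

lemma card_fibres_const:
  assumes "finite E" "finite T" "f ` E \<subseteq> T" "\<And>U. U \<in> T \<Longrightarrow> card {x\<in>E. f x = U} = c"
  shows "card E = card T * c"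
proof -
  have "card E = (\<Sum>x\<in>E. 1)" by simp
  also have "\<dots> = (\<Sum>U\<in>T. \<Sum>x\<in>{x. x \<in> E \<and> f x = U}. 1)"
    by (rule sum.group[symmetric]) (use assms in auto)
  also have "\<dots> = (\<Sum>U\<in>T. c)" using assms(4) by simp
  finally show ?thesis by simp
qed

definition supspaces :: "('a::field^'k) set \<Rightarrow> nat \<Rightarrow> ('a^'k) set set" where
  "supspaces W d = {U. vec.subspace U \<and> W \<subseteq> U \<and> vec.dim U = d}"

lemma card_supspaces:
  fixes W :: "('a::{finite,field}^'k) set"
  assumes W: "vec.subspace W" and le: "vec.dim W + s \<le> CARD('k)"
  shows "card (ext_set W UNIV s) = card (supspaces W (vec.dim W + s)) * (\<Prod>i<s. CARD('a)^(vec.dim W + s) - CARD('a)^(vec.dim W + i))"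
proof (rule card_fibres_const[where f = "\<lambda>xs. vec.span (W \<union> set xs)"])
  show "finite (ext_set W UNIV s)"
  proof -
    have fl: "finite {xs::('a^'k) list. set xs \<subseteq> UNIV \<and> length xs = s}"
      by (rule finite_lists_length_eq) simp
    show ?thesis by (rule finite_subset[OF _ fl]) (auto simp: ext_set_def)
  qed
  show "finite (supspaces W (vec.dim W + s))" by simp
  show "(\<lambda>xs. vec.span (W \<union> set xs)) ` ext_set W UNIV s \<subseteq> supspaces W (vec.dim W + s)"
    using vec.span_superset by (fastforce simp: ext_set_def supspaces_def)
  fix U assume U: "U \<in> supspaces W (vec.dim W + s)"
  have Us: "vec.subspace U" "W \<subseteq> U" "vec.dim U = vec.dim W + s" using U by (auto simp: supspaces_def)
  have "{xs \<in> ext_set W UNIV s. vec.span (W \<union> set xs) = U} = ext_set W U s"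
  proof (intro equalityI subsetI)
    fix xs assume "xs \<in> {xs \<in> ext_set W UNIV s. vec.span (W \<union> set xs) = U}"
    then show "xs \<in> ext_set W U s"
      using vec.span_superset[of "W \<union> set xs"] by (auto simp: ext_set_def)
  next
    fix xs assume xs: "xs \<in> ext_set W U s"
    have sub: "vec.span (W \<union> set xs) \<subseteq> U"
      by (rule vec.span_minimal[OF _ Us(1)]) (use xs Us in \<open>auto simp: ext_set_def\<close>)
    have "vec.span (W \<union> set xs) = U"
      by (rule vec.subspace_dim_equal[OF vec.subspace_span Us(1) sub]) (use xs Us in \<open>simp add: ext_set_def\<close>)
    then show "xs \<in> {xs \<in> ext_set W UNIV s. vec.span (W \<union> set xs) = U}"
      using xs by (auto simp: ext_set_def)
  qed
  then show "card {xs \<in> ext_set W UNIV s. vec.span (W \<union> set xs) = U} = (\<Prod>i<s. CARD('a)^(vec.dim W + s) - CARD('a)^(vec.dim W + i))"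
    using card_ext_set[OF W Us(1) Us(2)] Us(3) by simp
qed

lemma card_field_ge2: "CARD('a::{finite,field}) \<ge> 2"
proof -
  have "card {0::'a, 1} \<le> CARD('a)" by (rule card_mono) auto
  then show ?thesis by simp
qed

lemma real_pow_diff:
  assumes "a \<le> b"
  shows "real (CARD('a::{finite,field})^b - CARD('a)^a) = real CARD('a)^b - real CARD('a)^a"
proof -
  have "CARD('a)^a \<le> CARD('a)^b" using assms card_field_ge2[where 'a='a] by (intro power_increasing) auto
  then show ?thesis by (simp add: of_nat_diff)
qed

lemma card_supspaces_gauss:
  fixes W :: "('a::{finite,field}^'k) set"
  assumes W: "vec.subspace W" and t: "vec.dim W = t" and tr: "t \<le> r" and rk: "r \<le> CARD('k)"
  shows "real (card (supspaces W r)) = gauss_binom CARD('a) (int CARD('k) - int t) (int r - int t)"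
proof -
  define s where "s = r - t"
  define q where "q = real CARD('a)"
  have q2: "q \<ge> 2" using card_field_ge2[where 'a='a] by (simp add: q_def)
  have r: "r = vec.dim W + s" using t tr by (simp add: s_def)
  have E1: "card (ext_set W UNIV s) = (\<Prod>i<s. CARD('a)^CARD('k) - CARD('a)^(t + i))"
    using card_ext_set[OF W vec.subspace_UNIV subset_UNIV, of s] r rk t by (simp add: card_cart_basis)
  have E2: "card (ext_set W UNIV s) = card (supspaces W r) * (\<Prod>i<s. CARD('a)^r - CARD('a)^(t + i))"
    using card_supspaces[OF W, of s] r rk t by simp
  have P1: "real (\<Prod>i<s. CARD('a)^CARD('k) - CARD('a)^(t + i)) = (\<Prod>i<s. q^t * (q^(CARD('k) - t) - q^i))"
  proof -
    have "real (CARD('a)^CARD('k) - CARD('a)^(t + i)) = q^t * (q^(CARD('k) - t) - q^i)" if "i < s" for i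
    proof -
      have "t + i \<le> CARD('k)" using that s_def tr rk by simp
      then have "real (CARD('a)^CARD('k) - CARD('a)^(t + i)) = q^CARD('k) - q^(t+i)"
        by (simp add: real_pow_diff q_def)
      also have "\<dots> = q^t * (q^(CARD('k) - t) - q^i)"
        using \<open>t + i \<le> CARD('k)\<close> by (simp add: algebra_simps power_add[symmetric])
      finally show ?thesis .
    qed
    then show ?thesis by (simp add: of_nat_prod)
  qed
  have P2: "real (\<Prod>i<s. CARD('a)^r - CARD('a)^(t + i)) = (\<Prod>i<s. q^t * (q^s - q^i))"
  proof -
    have "real (CARD('a)^r - CARD('a)^(t + i)) = q^t * (q^s - q^i)" if "i < s" for i
    proof -
      have "t + i \<le> r" using that s_def tr by simp
      then have "real (CARD('a)^r - CARD('a)^(t + i)) = q^r - q^(t+i)"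
        by (simp add: real_pow_diff q_def)
      also have "\<dots> = q^t * (q^s - q^i)"
        using tr by (simp add: s_def algebra_simps power_add[symmetric])
      finally show ?thesis .
    qed
    then show ?thesis by (simp add: of_nat_prod)
  qed
  have pos: "(\<Prod>i<s. q^t * (q^s - q^i)) \<noteq> 0"
  proof -
    have "q^t * (q^s - q^i) \<noteq> 0" if "i < s" for i
    proof -
      have "q^i < q^s" using that q2 by (intro power_strict_increasing) auto
      moreover have "q^t > 0" using q2 by simp
      ultimately show ?thesis using q2 by simp
    qed
    then show ?thesis by (subst prod_zero_iff) auto
  qed
  have "real (card (supspaces W r)) = (\<Prod>i<s. q^t * (q^(CARD('k) - t) - q^i)) / (\<Prod>i<s. q^t * (q^s - q^i))"
    using E1 E2 P1 P2 pos by (metis (no_types, lifting) nonzero_mult_div_cancel_right of_nat_mult)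
  also have "\<dots> = (\<Prod>i<s. (q^(CARD('k) - t) - q^i) / (q^s - q^i))"
    using q2 by (simp add: prod_dividef[symmetric])
  also have "\<dots> = gauss_binom CARD('a) (int CARD('k) - int t) (int r - int t)"
  proof -
    have "nat (int CARD('k) - int t) = CARD('k) - t" "nat (int r - int t) = s" using tr rk by (auto simp: s_def)
    then show ?thesis using tr rk by (simp add: gauss_binom_def q_def)
  qed
  finally show ?thesis .
qed



lemma sum_Pow_card:
  fixes h :: "nat \<Rightarrow> real"
  assumes "finite A"
  shows "(\<Sum>D\<in>Pow A. h (card D)) = (\<Sum>j=0..card A. real (card A choose j) * h j)"
proof -
  have "(\<Sum>D\<in>Pow A. h (card D)) = (\<Sum>j\<in>{0..card A}. \<Sum>D\<in>{D. D \<in> Pow A \<and> card D = j}. h (card D))"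
    by (rule sum.group[symmetric]) (use assms in \<open>auto intro: card_mono\<close>)
  also have "\<dots> = (\<Sum>j\<in>{0..card A}. real (card A choose j) * h j)"
  proof (rule sum.cong[OF refl])
    fix j
    have "(\<Sum>D\<in>{D. D \<in> Pow A \<and> card D = j}. h (card D)) = (\<Sum>D\<in>{D. D \<subseteq> A \<and> card D = j}. h j)"
      by (rule sum.cong) auto
    also have "\<dots> = real (card A choose j) * h j" using n_subsets[OF assms, of j] by simp
    finally show "(\<Sum>D\<in>{D. D \<in> Pow A \<and> card D = j}. h (card D)) = real (card A choose j) * h j" .
  qed
  finally show ?thesis .
qed

lemma sum_supsets:
  fixes f :: "'k set \<Rightarrow> real"
  assumes "finite Y" "S \<subseteq> Y"
  shows "(\<Sum>T\<in>{T. S \<subseteq> T \<and> T \<subseteq> Y}. f T) = (\<Sum>D\<in>Pow (Y - S). f (S \<union> D))"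
proof -
  have inj: "inj_on (\<lambda>D. S \<union> D) (Pow (Y - S))" by (auto simp: inj_on_def)
  have img: "(\<lambda>D. S \<union> D) ` Pow (Y - S) = {T. S \<subseteq> T \<and> T \<subseteq> Y}"
  proof (intro equalityI subsetI)
    fix T assume "T \<in> {T. S \<subseteq> T \<and> T \<subseteq> Y}"
    then show "T \<in> (\<lambda>D. S \<union> D) ` Pow (Y - S)" by (intro image_eqI[of _ _ "T - S"]) auto
  qed (use assms in auto)
  show ?thesis using sum.reindex[OF inj, of f] img by simp
qed

lemma alt_sum_Pow:
  assumes "finite A"
  shows "(\<Sum>D\<in>Pow A. (-1::real)^card D) = (if A = {} then 1 else 0)"
proof (cases "A = {}")
  case True then show ?thesis by simp
next
  case False
  then have "card A > 0" using assms by auto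
  have "(\<Sum>D\<in>Pow A. (-1::real)^card D) = (\<Sum>j=0..card A. real (card A choose j) * (-1)^j)"
    by (rule sum_Pow_card[OF assms])
  also have "\<dots> = (\<Sum>j\<le>card A. (-1)^j * real (card A choose j))"
    by (simp add: atLeast0AtMost mult.commute)
  also have "\<dots> = 0" using choose_alternating_sum[OF \<open>card A > 0\<close>] by simp
  finally show ?thesis using False by simp
qed

lemma moebius_one:
  fixes S Y :: "'k::finite set"
  shows "(\<Sum>T\<in>{T. S \<subseteq> T}. (-1::real)^(card T - card S) * (if T \<subseteq> Y then 1 else 0)) = (if Y = S then 1 else 0)"
proof -
  have "(\<Sum>T\<in>{T. S \<subseteq> T}. (-1::real)^(card T - card S) * (if T \<subseteq> Y then 1 else 0))
      = (\<Sum>T\<in>{T. S \<subseteq> T \<and> T \<subseteq> Y}. (-1::real)^(card T - card S))"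
    by (rule sum.mono_neutral_cong_right) auto
  also have "\<dots> = (if Y = S then 1 else 0)"
  proof (cases "S \<subseteq> Y")
    case False
    then have e: "{T. S \<subseteq> T \<and> T \<subseteq> Y} = {}" by auto
    have "Y \<noteq> S" using False by auto
    then show ?thesis by (simp only: e sum.empty if_False)
  next
    case True
    have "(\<Sum>T\<in>{T. S \<subseteq> T \<and> T \<subseteq> Y}. (-1::real)^(card T - card S))
        = (\<Sum>D\<in>Pow (Y - S). (-1::real)^(card (S \<union> D) - card S))"
      by (rule sum_supsets) (use True in auto)
    also have "\<dots> = (\<Sum>D\<in>Pow (Y - S). (-1::real)^(card D))"
    proof (rule sum.cong[OF refl])
      fix D assume "D \<in> Pow (Y - S)"
      then have "card (S \<union> D) = card S + card D" by (subst card_Un_disjoint) auto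
      then show "(-1::real)^(card (S \<union> D) - card S) = (-1)^(card D)" by simp
    qed
    also have "\<dots> = (if Y - S = {} then 1 else 0)" by (rule alt_sum_Pow) simp
    finally show ?thesis using True by auto
  qed
  finally show ?thesis .
qed

lemma incl_excl:
  fixes X :: "'u \<Rightarrow> 'k::finite set" and F :: "'u set" and G :: "nat \<Rightarrow> real"
  assumes fin: "finite F" and G: "\<And>T. real (card {U\<in>F. T \<subseteq> X U}) = G (card T)"
  shows "real (card {U\<in>F. card (X U) = x}) =
     real (CARD('k) choose x) * (\<Sum>j=0..CARD('k)-x. (-1)^j * real ((CARD('k)-x) choose j) * G (x+j))"
proof -
  let ?Sx = "{S::'k set. card S = x}"
  have "{U\<in>F. card (X U) = x} = (\<Union>S\<in>?Sx. {U\<in>F. X U = S})" by auto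
  then have "card {U\<in>F. card (X U) = x} = (\<Sum>S\<in>?Sx. card {U\<in>F. X U = S})"
    using fin by (simp only:) (rule card_UN_disjoint, auto)
  then have "real (card {U\<in>F. card (X U) = x}) = (\<Sum>S\<in>?Sx. real (card {U\<in>F. X U = S}))" by simp
  also have "\<dots> = (\<Sum>S\<in>?Sx. \<Sum>T\<in>{T. S \<subseteq> T}. (-1::real)^(card T - card S) * G (card T))"
  proof (rule sum.cong[OF refl])
    fix S :: "'k set"
    have "real (card {U\<in>F. X U = S}) = (\<Sum>U\<in>F. if X U = S then 1 else 0)"
      using fin by (simp add: sum.If_cases Collect_conj_eq Int_commute)
    also have "\<dots> = (\<Sum>U\<in>F. \<Sum>T\<in>{T. S \<subseteq> T}. (-1::real)^(card T - card S) * (if T \<subseteq> X U then 1 else 0))"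
      by (simp add: moebius_one)
    also have "\<dots> = (\<Sum>T\<in>{T. S \<subseteq> T}. \<Sum>U\<in>F. (-1::real)^(card T - card S) * (if T \<subseteq> X U then 1 else 0))"
      by (rule sum.swap)
    also have "\<dots> = (\<Sum>T\<in>{T. S \<subseteq> T}. (-1::real)^(card T - card S) * real (card {U\<in>F. T \<subseteq> X U}))"
      using fin by (simp add: sum_distrib_left[symmetric] sum.If_cases Collect_conj_eq Int_commute)
    also have "\<dots> = (\<Sum>T\<in>{T. S \<subseteq> T}. (-1::real)^(card T - card S) * G (card T))"
      by (simp add: G)
    finally show "real (card {U\<in>F. X U = S}) = (\<Sum>T\<in>{T. S \<subseteq> T}. (-1::real)^(card T - card S) * G (card T))" .
  qed
  also have "\<dots> = (\<Sum>S\<in>?Sx. (\<Sum>j=0..CARD('k)-x. (-1)^j * real ((CARD('k)-x) choose j) * G (x+j)))"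
  proof (rule sum.cong[OF refl])
    fix S :: "'k set" assume "S \<in> ?Sx"
    then have cS: "card S = x" by simp
    have cC: "card (UNIV - S) = CARD('k) - x" using cS by (simp add: card_Diff_subset)
    have "(\<Sum>T\<in>{T. S \<subseteq> T}. (-1::real)^(card T - card S) * G (card T))
        = (\<Sum>T\<in>{T. S \<subseteq> T \<and> T \<subseteq> UNIV}. (-1::real)^(card T - card S) * G (card T))" by simp
    also have "\<dots> = (\<Sum>D\<in>Pow (UNIV - S). (-1::real)^(card (S \<union> D) - card S) * G (card (S \<union> D)))"
      by (rule sum_supsets) auto
    also have "\<dots> = (\<Sum>D\<in>Pow (UNIV - S). (\<lambda>j. (-1::real)^j * G (x + j)) (card D))"
    proof (rule sum.cong[OF refl])
      fix D assume "D \<in> Pow (UNIV - S)"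
      then have "card (S \<union> D) = card S + card D" by (subst card_Un_disjoint) auto
      then show "(-1::real)^(card (S \<union> D) - card S) * G (card (S \<union> D)) = (\<lambda>j. (-1::real)^j * G (x + j)) (card D)"
        using cS by simp
    qed
    also have "\<dots> = (\<Sum>j=0..CARD('k)-x. real ((CARD('k)-x) choose j) * ((-1)^j * G (x + j)))"
      using sum_Pow_card[of "UNIV - S" "\<lambda>j. (-1::real)^j * G (x + j)"] cC by simp
    finally show "(\<Sum>T\<in>{T. S \<subseteq> T}. (-1::real)^(card T - card S) * G (card T))
        = (\<Sum>j=0..CARD('k)-x. (-1)^j * real ((CARD('k)-x) choose j) * G (x+j))"
      by (simp add: algebra_simps)
  qed
  also have "\<dots> = real (card ?Sx) * (\<Sum>j=0..CARD('k)-x. (-1)^j * real ((CARD('k)-x) choose j) * G (x+j))"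
    by simp
  also have "card ?Sx = CARD('k) choose x" using n_subsets[of "UNIV::'k set" x] by simp
  finally show ?thesis .
qed



lemma subspace_transitive:
  fixes U U' :: "('a::field^'k) set"
  assumes U: "vec.subspace U" and U': "vec.subspace U'" and d: "vec.dim U = vec.dim U'"
  shows "\<exists>g. Vector_Spaces.linear (*s) (*s) g \<and> inj g \<and> g ` U = U'"
proof -
  obtain B where B: "B \<subseteq> U" "vec.independent B" "U \<subseteq> vec.span B" "card B = vec.dim U"
    using vec.basis_exists by blast
  obtain C where C: "C \<subseteq> U'" "vec.independent C" "U' \<subseteq> vec.span C" "card C = vec.dim U'"
    using vec.basis_exists by blast
  have fB: "finite B" "finite C" using B C vec.independent_explicit by blast+
  obtain h where h: "bij_betw h B C" using fB B(4) C(4) d by (metis finite_same_card_bij)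
  have hB: "h ` B = C" "inj_on h B" using h by (auto simp: bij_betw_def)
  obtain g where g: "Vector_Spaces.linear (*s) (*s) g" "inj g" "\<forall>x\<in>B. g x = h x"
    using vec.linear_independent_extend_inj[OF B(2), of h] hB C(2) by auto
  have sB: "vec.span B = U" using B U vec.span_minimal by blast
  have sC: "vec.span C = U'" using C U' vec.span_minimal by blast
  have "g ` B = C" using g(3) hB(1) by (auto simp: image_def)
  then have "g ` U = U'" using vec.linear_span_image[OF g(1), of B] sB sC by simp
  then show ?thesis using g by blast
qed

lemma rows_eq: "rows (M::'a^'k^'n) = range (\<lambda>i. M $ i)"
  by (auto simp: rows_def row_def vec_nth_inverse)

lemma fibre_le:
  fixes U U' :: "('a::{field,finite}^'k) set"
  assumes U: "vec.subspace U" and U': "vec.subspace U'" and d: "vec.dim U = vec.dim U'"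
  shows "card {M::'a^'k^'n. vec.span (rows M) = U} \<le> card {M::'a^'k^'n. vec.span (rows M) = U'}"
proof -
  obtain g where g: "Vector_Spaces.linear (*s) (*s) g" "inj g" "g ` U = U'"
    using subspace_transitive[OF U U' d] by blast
  define \<Phi> where "\<Phi> = (\<lambda>M::'a^'k^'n. \<chi> i. g (M $ i))"
  have rows\<Phi>: "rows (\<Phi> M) = g ` rows M" for M
    by (auto simp: rows_eq \<Phi>_def)
  show ?thesis
  proof (rule card_inj_on_le)
    show "inj_on \<Phi> {M. vec.span (rows M) = U}"
    proof (rule inj_onI)
      fix M M' assume "\<Phi> M = \<Phi> M'"
      then have "g (M $ i) = g (M' $ i)" for i by (metis \<Phi>_def vec_lambda_beta)
      then have "M $ i = M' $ i" for i using g(2) by (meson injD)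
      then show "M = M'" by (simp add: vec_eq_iff)
    qed
    show "\<Phi> ` {M. vec.span (rows M) = U} \<subseteq> {M. vec.span (rows M) = U'}"
      using g vec.linear_span_image[OF g(1)] by (auto simp: rows\<Phi>)
  qed simp
qed

lemma fibre_nonempty:
  fixes U :: "('a::{field,finite}^'k) set"
  assumes U: "vec.subspace U" and r: "vec.dim U \<le> CARD('n)"
  shows "\<exists>M::'a^'k^'n. vec.span (rows M) = U"
proof -
  obtain B where B: "B \<subseteq> U" "vec.independent B" "U \<subseteq> vec.span B" "card B = vec.dim U"
    using vec.basis_exists by blast
  have fB: "finite B" using B vec.independent_explicit by blast
  have sB: "vec.span B = U" using B U vec.span_minimal by blast
  obtain I :: "'n set" where I: "card I = card B"
    using r B(4) by (metis obtain_subset_with_card_n)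
  have fI: "finite I" by simp
  obtain h where h: "bij_betw h I B" using fB fI I by (metis finite_same_card_bij)
  define M :: "'a^'k^'n" where "M = (\<chi> i. if i \<in> I then h i else 0)"
  have "rows M \<subseteq> insert 0 B" using h by (auto simp: rows_eq M_def bij_betw_def)
  moreover have "B \<subseteq> rows M"
  proof
    fix b assume "b \<in> B"
    then obtain i where "i \<in> I" "h i = b" using h by (auto simp: bij_betw_def)
    then show "b \<in> rows M" by (auto simp: rows_eq M_def)
  qed
  ultimately have "vec.span (rows M) = vec.span B"
    by (metis subset_antisym vec.span_insert_0 vec.span_mono)
  then show ?thesis using sB by blast
qed


theorem theorem1:
  fixes x r :: nat
  assumes "x \<le> r" and "r \<le> min CARD('n::finite) CARD('k::finite)"
  shows "measure_pmf.prob
           (cond_pmf (pmf_of_set (UNIV :: ('a::{finite,field}^'k^'n) set)) {M. rank M = r})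
           {M. card {i. axis i 1 \<in> vec.span (rows M)} = x}
         = real (CARD('k) choose x) / gauss_binom CARD('a) (int CARD('k)) (int r)
           * (\<Sum>j = 0..CARD('k) - x. (-1) ^ j * real ((CARD('k) - x) choose j)
                * gauss_binom CARD('a) (int CARD('k) - int x - int j) (int r - int x - int j))"
proof -
  have rk: "r \<le> CARD('k)" and rn: "r \<le> CARD('n)" using assms(2) by auto
  define \<rho> where "\<rho> = (\<lambda>M::'a^'k^'n. vec.span (rows M))"
  define Xs where "Xs = (\<lambda>U::('a^'k) set. {i. axis i (1::'a) \<in> U})"
  define F where "F = {U::('a^'k) set. vec.subspace U \<and> vec.dim U = r}"
  define G where "G = (\<lambda>t::nat. gauss_binom CARD('a) (int CARD('k) - int t) (int r - int t))"
  define W where "W = (\<lambda>T::'k set. vec.span ((\<lambda>i. axis i (1::'a)) ` T))"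
  have dimW: "vec.dim (W T) = card T" for T
  proof -
    have ind: "vec.independent ((\<lambda>i. axis i (1::'a)) ` T)"
      by (rule vec.independent_mono[OF independent_cart_basis]) (auto simp: cart_basis_def)
    have "card ((\<lambda>i. axis i (1::'a)) ` T) = card T"
      by (rule card_image) (auto simp: inj_on_def axis_eq_axis)
    then show ?thesis using ind by (simp add: W_def vec.dim_eq_card_independent)
  qed
  have WU: "T \<subseteq> Xs U \<longleftrightarrow> W T \<subseteq> U" if U: "vec.subspace U" for T U
  proof
    assume "T \<subseteq> Xs U"
    then have "(\<lambda>i. axis i (1::'a)) ` T \<subseteq> U" by (auto simp: Xs_def)
    then show "W T \<subseteq> U" unfolding W_def by (rule vec.span_minimal[OF _ U])
  next
    assume "W T \<subseteq> U"
    then show "T \<subseteq> Xs U" using vec.span_superset[of "(\<lambda>i. axis i (1::'a)) ` T"]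
      by (auto simp: Xs_def W_def)
  qed
  have GT: "real (card {U\<in>F. T \<subseteq> Xs U}) = G (card T)" for T
  proof (cases "card T \<le> r")
    case True
    have "{U\<in>F. T \<subseteq> Xs U} = supspaces (W T) r" using WU by (auto simp: F_def supspaces_def)
    then show ?thesis
      using card_supspaces_gauss[OF _ dimW True rk] by (simp add: G_def W_def)
  next
    case False
    have "{U\<in>F. T \<subseteq> Xs U} = {}"
    proof (rule ccontr)
      assume "{U\<in>F. T \<subseteq> Xs U} \<noteq> {}"
      then obtain U where "U \<in> F" "T \<subseteq> Xs U" by auto
      then have "W T \<subseteq> U" "vec.dim U = r" using WU by (auto simp: F_def)
      then have "card T \<le> r" using vec.dim_subset[of "W T" U] dimW by simp
      then show False using False by simp
    qed
    then show ?thesis using False by (simp add: G_def gauss_binom_def)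
  qed
  have finF: "finite F" by simp
  have IE: "real (card {U\<in>F. card (Xs U) = x}) =
     real (CARD('k) choose x) * (\<Sum>j=0..CARD('k)-x. (-1)^j * real ((CARD('k)-x) choose j) * G (x+j))"
    by (rule incl_excl[OF finF GT])
  have cardF: "real (card F) = gauss_binom CARD('a) (int CARD('k)) (int r)"
    using GT[of "{}"] by (simp add: G_def)
  obtain J :: "'k set" where J: "card J = r" using rk by (metis obtain_subset_with_card_n)
  have U0: "W J \<in> F" using dimW J by (simp add: F_def W_def)
  define c where "c = card {M::'a^'k^'n. \<rho> M = W J}"
  have fib: "card {M::'a^'k^'n. \<rho> M = U} = c" if "U \<in> F" for U
  proof -
    have a: "vec.subspace U" "vec.subspace (W J)" "vec.dim U = vec.dim (W J)"
      using that U0 by (auto simp: F_def)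
    have "card {M::'a^'k^'n. vec.span (rows M) = U} \<le> card {M::'a^'k^'n. vec.span (rows M) = W J}"
      by (rule fibre_le[OF a])
    moreover have "card {M::'a^'k^'n. vec.span (rows M) = W J} \<le> card {M::'a^'k^'n. vec.span (rows M) = U}"
      by (rule fibre_le[OF a(2) a(1) a(3)[symmetric]])
    ultimately show ?thesis unfolding c_def \<rho>_def by (rule le_antisym)
  qed
  have cpos: "c > 0"
  proof -
    obtain M :: "'a^'k^'n" where "\<rho> M = W J"
      using fibre_nonempty[of "W J"] U0 rn by (auto simp: F_def \<rho>_def)
    then show ?thesis unfolding c_def by (auto simp: card_gt_0_iff)
  qed
  have cnt: "card {M::'a^'k^'n. \<rho> M \<in> A} = card A * c" if A: "A \<subseteq> F" for A
  proof (rule card_fibres_const[where f = \<rho>])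
    show "finite A" using finite_subset[OF A finF] .
    fix U assume "U \<in> A"
    then have "{M \<in> {M. \<rho> M \<in> A}. \<rho> M = U} = {M. \<rho> M = U}" by auto
    then show "card {M \<in> {M. \<rho> M \<in> A}. \<rho> M = U} = c" using fib A \<open>U \<in> A\<close> by auto
  qed auto
  have Om: "{M::'a^'k^'n. rank M = r} = {M. \<rho> M \<in> F}"
    by (auto simp: F_def \<rho>_def row_rank_def_gen)
  have Ev: "{M::'a^'k^'n. rank M = r} \<inter> {M. card {i. axis i 1 \<in> vec.span (rows M)} = x}
      = {M. \<rho> M \<in> {U\<in>F. card (Xs U) = x}}"
    by (auto simp: F_def \<rho>_def Xs_def row_rank_def_gen)
  have cardOm: "card {M::'a^'k^'n. rank M = r} = card F * c" using cnt[of F] Om by simp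
  have FnE: "F \<noteq> {}" using U0 by auto
  have ne: "{M::'a^'k^'n. rank M = r} \<noteq> {}"
  proof
    assume "{M::'a^'k^'n. rank M = r} = {}"
    then have "card F * c = 0" using cardOm by simp
    then show False using cpos FnE finF by simp
  qed
  have cond: "cond_pmf (pmf_of_set (UNIV :: ('a^'k^'n) set)) {M. rank M = r} = pmf_of_set {M. rank M = r}"
  proof (rule pmf_eqI)
    fix M :: "'a^'k^'n"
    have ne': "set_pmf (pmf_of_set (UNIV :: ('a^'k^'n) set)) \<inter> {M. rank M = r} \<noteq> {}"
      using ne by simp
    show "pmf (cond_pmf (pmf_of_set UNIV) {M. rank M = r}) M = pmf (pmf_of_set {M. rank M = r}) M"
      using ne by (simp add: pmf_cond[OF ne'] measure_pmf_of_set indicator_def)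
  qed
  have "measure_pmf.prob
           (cond_pmf (pmf_of_set (UNIV :: ('a::{finite,field}^'k^'n) set)) {M. rank M = r})
           {M. card {i. axis i 1 \<in> vec.span (rows M)} = x}
      = real (card {M. \<rho> M \<in> {U\<in>F. card (Xs U) = x}}) / real (card {M::'a^'k^'n. rank M = r})"
    unfolding cond using ne by (simp add: measure_pmf_of_set Ev)
  also have "\<dots> = real (card {U\<in>F. card (Xs U) = x} * c) / real (card F * c)"
    using cnt[of "{U\<in>F. card (Xs U) = x}"] cardOm by simp
  also have "\<dots> = real (card {U\<in>F. card (Xs U) = x}) / real (card F)"
    using cpos by simp
  also have "\<dots> = real (CARD('k) choose x) / gauss_binom CARD('a) (int CARD('k)) (int r)
           * (\<Sum>j = 0..CARD('k) - x. (-1) ^ j * real ((CARD('k) - x) choose j)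
                * gauss_binom CARD('a) (int CARD('k) - int x - int j) (int r - int x - int j))"
    unfolding IE cardF by (simp add: G_def algebra_simps)
  finally show ?thesis .
qed

end
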